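(* Let $\bar u=\langle F_i\mid i<\omega\rangle$, with maps $f^m_n\in\ddagger\mathcal{F}_P(F_m,F_n)$, be a Fraïssé sequence for the category $\ddagger\mathcal{F}_P$, and let $(\mathbb F,E)$ be its limit. Then $E\subseteq\mathrm{End}(\mathbb F)$ and $E$ is dense in $\mathbb F$.
   Context: Fix $P\subseteq\{3,4,\ldots,\infty\}$. A finite tree is viewed as a graph with reflexive symmetric edge relation $R$. For finite trees $A,B$, a monotone epimorphism $f\colon B\to A$ (edges map onto edges and preimages of connected sets are connected) is weakly coherent at a vertex $a\in A$ with $\mathrm{ord}(a)=n\geq 3$ if there is $b\in f^{-1}(a)$ (the witness) with $\mathrm{ord}(b)\geq n$ such that the preimages under $f$ of the $n$ distinct connected components of $A\setminus\{a\}$ lie in $n$ distinct connected components of $B\setminus\{b\}$; $f$ is weakly coherent if this holds at every $a$ with $\mathrm{ord}(a)\geq3$. The category $\ddagger\mathcal{F}_P$: objects are finite trees $A$ having at least one ramification point, in which every vertex is an endpoint or a ramification point, each ramification point $a$ carries exactly one label $p\in P$ (unary predicate $U_p(a)$) with $\mathrm{ord}(a)\leq p$, and endpoints carry no label. An arrow $f\in\ddagger\mathcal{F}_P(B,A)$ is a pair $(p(f),e(f))$ where $p(f)\colon B\to A$ is a weakly coherent epimorphism of trees such that whenever $U_p(a)$ holds and $b$ witnesses the weak coherence of $p(f)$ at $a$, then $U_p(b)$ holds; and $e(f)\colon\mathrm{End}(A)\to\mathrm{End}(B)$ is a map with $p(f)\circ e(f)=\mathrm{Id}_{\mathrm{End}(A)}$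 (here $\mathrm{End}(X)$ is the set of endpoints). Composition is $f\circ g=(p(f)\circ p(g),e(g)\circ e(f))$. A Fraïssé sequence for $\ddagger\mathcal{F}_P$ is a sequence $\langle F_n\rangle$ with arrows $f^m_n\in\ddagger\mathcal{F}_P(F_m,F_n)$ such that (1) for every object $X$ there is $n$ with $\ddagger\mathcal{F}_P(F_n,X)\neq\varnothing$, and (2) for every $n$ and every arrow $f\in\ddagger\mathcal{F}_P(Y,F_n)$ there exist $m\geq n$ and $g\in\ddagger\mathcal{F}_P(F_m,Y)$ with $f\circ g=f^m_n$. The limit of such a sequence is the pair $(\mathbb F,E)$, where $\mathbb F\subseteq\prod_i F_i$ is the inverse limit (as a topological graph, with product topology of discrete spaces) of the projections $p(f^{m}_n)$, with canonical projections $f_m\colon\mathbb F\to F_m$, and $E$ is the direct limit of the embedding parts $e(f^m_n)$, i.e. the countable set of points of $\mathbb F$ determined by sequences of the form $(p(f^m_0)(y),\ldots,p(f^m_{m-1})(y),y,e(f^{m+1}_m)(y),e(f^{m+2}_m)(y),\ldots)$ for $y\in\mathrm{End}(F_m)$. An endpoint of a topological graph $G$ is a vertex $x$ such that whenever an arc is embedded in $G$ through $x$, $x$ is the image of an endpoint of the arc. *)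

theory Defs
  imports "HOL-Analysis.Analysis" "HOL-Library.Extended_Nat"
begin

text \<open>A finite graph with vertices in nat: vertex set, reflexive symmetric edge
relation, and a label function (Some p means that U_p holds, None means no label).\<close>

record ltree =
  V   :: "nat set"
  R   :: "nat \<Rightarrow> nat \<Rightarrow> bool"
  lab :: "nat \<Rightarrow> enat option"

definition restr :: "ltree \<Rightarrow> nat set \<Rightarrow> nat \<Rightarrow> nat \<Rightarrow> bool" where
  "restr G S = (\<lambda>a b. a \<in> S \<and> b \<in> S \<and> R G a b)"

definition conn_set :: "ltree \<Rightarrow> nat set \<Rightarrow> bool" where
  "conn_set G S \<longleftrightarrow> S \<subseteq> V G \<and> (\<forall>x\<in>S. \<forall>y\<in>S. (restr G S)\<^sup>*\<^sup>* x y)"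

definition is_tree :: "ltree \<Rightarrow> bool" where
  "is_tree G \<longleftrightarrow> finite (V G) \<and> V G \<noteq> {}
     \<and> (\<forall>x y. R G x y \<longrightarrow> x \<in> V G \<and> y \<in> V G)
     \<and> (\<forall>x\<in>V G. R G x x)
     \<and> (\<forall>x y. R G x y \<longrightarrow> R G y x)
     \<and> conn_set G (V G)
     \<and> \<not> (\<exists>cs. 3 \<le> length cs \<and> distinct cs \<and> set cs \<subseteq> V G
            \<and> (\<forall>i < length cs. R G (cs ! i) (cs ! ((i + 1) mod length cs))))"

definition ord :: "ltree \<Rightarrow> nat \<Rightarrow> nat" where
  "ord G a = card {y \<in> V G. y \<noteq> a \<and> R G a y}"

definition Ends :: "ltree \<Rightarrow> nat set" where
  "Ends G = {a \<in> V G. ord G a = 1}"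

definition comps :: "ltree \<Rightarrow> nat \<Rightarrow> nat set set" where
  "comps G a = {C. \<exists>x \<in> V G - {a}. C = {y \<in> V G - {a}. (restr G (V G - {a}))\<^sup>*\<^sup>* x y}}"

definition preim :: "ltree \<Rightarrow> (nat \<Rightarrow> nat) \<Rightarrow> nat set \<Rightarrow> nat set" where
  "preim B f S = {x \<in> V B. f x \<in> S}"

definition epi :: "ltree \<Rightarrow> ltree \<Rightarrow> (nat \<Rightarrow> nat) \<Rightarrow> bool" where
  "epi B A f \<longleftrightarrow> (\<forall>x\<in>V B. f x \<in> V A)
     \<and> (\<forall>x y. R B x y \<longrightarrow> R A (f x) (f y))
     \<and> (\<forall>a a'. R A a a' \<longrightarrow> (\<exists>b b'. R B b b' \<and> f b = a \<and> f b' = a'))"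

definition mono_epi :: "ltree \<Rightarrow> ltree \<Rightarrow> (nat \<Rightarrow> nat) \<Rightarrow> bool" where
  "mono_epi B A f \<longleftrightarrow> epi B A f \<and> (\<forall>S. conn_set A S \<longrightarrow> conn_set B (preim B f S))"

definition wc_witness :: "ltree \<Rightarrow> ltree \<Rightarrow> (nat \<Rightarrow> nat) \<Rightarrow> nat \<Rightarrow> nat \<Rightarrow> bool" where
  "wc_witness B A f a b \<longleftrightarrow> b \<in> V B \<and> f b = a \<and> ord A a \<le> ord B b
     \<and> (\<exists>\<phi>. inj_on \<phi> (comps A a)
          \<and> (\<forall>C\<in>comps A a. \<phi> C \<in> comps B b \<and> preim B f C \<subseteq> \<phi> C))"

definition weakly_coherent :: "ltree \<Rightarrow> ltree \<Rightarrow> (nat \<Rightarrow> nat) \<Rightarrow> bool" where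
  "weakly_coherent B A f \<longleftrightarrow> mono_epi B A f
     \<and> (\<forall>a\<in>V A. 3 \<le> ord A a \<longrightarrow> (\<exists>b. wc_witness B A f a b))"

definition is_obj :: "enat set \<Rightarrow> ltree \<Rightarrow> bool" where
  "is_obj P A \<longleftrightarrow> is_tree A
     \<and> (\<exists>a\<in>V A. 3 \<le> ord A a)
     \<and> (\<forall>a\<in>V A. ord A a = 1 \<or> 3 \<le> ord A a)
     \<and> (\<forall>a\<in>V A. 3 \<le> ord A a \<longrightarrow> (\<exists>p\<in>P. lab A a = Some p \<and> enat (ord A a) \<le> p))
     \<and> (\<forall>a\<in>V A. ord A a = 1 \<longrightarrow> lab A a = None)"

record arrow =
  pm :: "nat \<Rightarrow> nat"
  em :: "nat \<Rightarrow> nat"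

definition is_arrow :: "enat set \<Rightarrow> ltree \<Rightarrow> ltree \<Rightarrow> arrow \<Rightarrow> bool" where
  "is_arrow P B A f \<longleftrightarrow> weakly_coherent B A (pm f)
     \<and> (\<forall>a\<in>V A. \<forall>b p. lab A a = Some p \<and> wc_witness B A (pm f) a b \<longrightarrow> lab B b = Some p)
     \<and> (\<forall>y\<in>Ends A. em f y \<in> Ends B \<and> pm f (em f y) = y)"

definition comp :: "arrow \<Rightarrow> arrow \<Rightarrow> arrow" where
  "comp f g = \<lparr>pm = pm f \<circ> pm g, em = em g \<circ> em f\<rparr>"

definition id_arrow :: arrow where
  "id_arrow = \<lparr>pm = id, em = id\<rparr>"

text \<open>Equality of arrows in the hom-set from B to A (as maps on the relevant carriers).\<close>
definition arr_eq :: "ltree \<Rightarrow> ltree \<Rightarrow> arrow \<Rightarrow> arrow \<Rightarrow> bool" where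
  "arr_eq B A f g \<longleftrightarrow> (\<forall>x\<in>V B. pm f x = pm g x) \<and> (\<forall>y\<in>Ends A. em f y = em g y)"

definition fraisse_seq :: "enat set \<Rightarrow> (nat \<Rightarrow> ltree) \<Rightarrow> (nat \<Rightarrow> nat \<Rightarrow> arrow) \<Rightarrow> bool" where
  "fraisse_seq P F f \<longleftrightarrow>
     (\<forall>n. is_obj P (F n))
   \<and> (\<forall>n m. n \<le> m \<longrightarrow> is_arrow P (F m) (F n) (f m n))
   \<and> (\<forall>n. arr_eq (F n) (F n) (f n n) id_arrow)
   \<and> (\<forall>n m k. n \<le> m \<and> m \<le> k \<longrightarrow> arr_eq (F k) (F n) (f k n) (comp (f m n) (f k m)))
   \<and> (\<forall>X. is_obj P X \<longrightarrow> (\<exists>n g. is_arrow P (F n) X g))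
   \<and> (\<forall>n Y g. is_obj P Y \<and> is_arrow P Y (F n) g \<longrightarrow>
        (\<exists>m\<ge>n. \<exists>h. is_arrow P (F m) Y h \<and> arr_eq (F m) (F n) (comp g h) (f m n)))"

definition Flim :: "(nat \<Rightarrow> ltree) \<Rightarrow> (nat \<Rightarrow> nat \<Rightarrow> arrow) \<Rightarrow> (nat \<Rightarrow> nat) set" where
  "Flim F f = {x. \<forall>i. x i \<in> V (F i) \<and> pm (f (Suc i) i) (x (Suc i)) = x i}"

definition Rlim :: "(nat \<Rightarrow> ltree) \<Rightarrow> (nat \<Rightarrow> nat) \<Rightarrow> (nat \<Rightarrow> nat) \<Rightarrow> bool" where
  "Rlim F x y \<longleftrightarrow> (\<forall>i. R (F i) (x i) (y i))"

definition Ftop :: "(nat \<Rightarrow> ltree) \<Rightarrow> (nat \<Rightarrow> nat \<Rightarrow> arrow) \<Rightarrow> (nat \<Rightarrow> nat) topology" where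
  "Ftop F f = subtopology (product_topology (\<lambda>i. discrete_topology (V (F i))) UNIV) (Flim F f)"

definition Elim :: "(nat \<Rightarrow> ltree) \<Rightarrow> (nat \<Rightarrow> nat \<Rightarrow> arrow) \<Rightarrow> (nat \<Rightarrow> nat) set" where
  "Elim F f = {x. \<exists>m. \<exists>y\<in>Ends (F m).
      x = (\<lambda>i. if i < m then pm (f m i) y else if i = m then y else em (f i m) y)}"

definition tg_connected :: "'a topology \<Rightarrow> ('a \<Rightarrow> 'a \<Rightarrow> bool) \<Rightarrow> 'a set \<Rightarrow> bool" where
  "tg_connected T Rel S \<longleftrightarrow> \<not> (\<exists>P Q. P \<noteq> {} \<and> Q \<noteq> {} \<and> P \<inter> Q = {} \<and> P \<union> Q = S
      \<and> closedin (subtopology T S) P \<and> closedin (subtopology T S) Q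
      \<and> (\<forall>x\<in>P. \<forall>y\<in>Q. \<not> Rel x y))"

definition tg_cut :: "'a topology \<Rightarrow> ('a \<Rightarrow> 'a \<Rightarrow> bool) \<Rightarrow> 'a set \<Rightarrow> 'a \<Rightarrow> bool" where
  "tg_cut T Rel S x \<longleftrightarrow> x \<in> S \<and> \<not> tg_connected T Rel (S - {x})"

definition tg_arc :: "'a topology \<Rightarrow> ('a \<Rightarrow> 'a \<Rightarrow> bool) \<Rightarrow> 'a set \<Rightarrow> bool" where
  "tg_arc T Rel S \<longleftrightarrow> S \<subseteq> topspace T \<and> compactin T S \<and> tg_connected T Rel S
     \<and> (\<exists>a b. a \<noteq> b \<and> {x \<in> S. \<not> tg_cut T Rel S x} = {a, b})"

definition tg_endpoint :: "'a topology \<Rightarrow> ('a \<Rightarrow> 'a \<Rightarrow> bool) \<Rightarrow> 'a \<Rightarrow> bool" where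
  "tg_endpoint T Rel x \<longleftrightarrow> x \<in> topspace T
     \<and> (\<forall>S. tg_arc T Rel S \<and> x \<in> S \<longrightarrow> \<not> tg_cut T Rel S x)"

end

theory Submission imports Defs begin

lemma rtranclp_sym_lemma:
  assumes "\<And>a b. r a b \<Longrightarrow> r b a" "r\<^sup>*\<^sup>* x y" shows "r\<^sup>*\<^sup>* y x"
  using assms(2) by (induction rule: rtranclp_induct)
    (auto intro: converse_rtranclp_into_rtranclp assms(1))

lemma tree_sym: "is_tree G \<Longrightarrow> R G a b \<Longrightarrow> R G b a"
  unfolding is_tree_def by blast

lemma tree_V: "is_tree G \<Longrightarrow> R G a b \<Longrightarrow> a \<in> V G \<and> b \<in> V G"
  unfolding is_tree_def by blast

lemma simple_path:
  assumes "(restr G S)\<^sup>*\<^sup>* x y" "x \<in> S"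
  shows "\<exists>ps. ps \<noteq> [] \<and> hd ps = x \<and> last ps = y \<and> distinct ps \<and> set ps \<subseteq> S \<and> successively (R G) ps"
  using assms(1)
proof (induction rule: rtranclp_induct)
  case base then show ?case using assms(2) by (intro exI[of _ "[x]"]) auto
next
  case (step y z)
  then obtain ps where ps: "ps \<noteq> []" "hd ps = x" "last ps = y" "distinct ps" "set ps \<subseteq> S"
      "successively (R G) ps" by blast
  from step(2) have z: "z \<in> S" "y \<in> S" "R G y z" by (auto simp: restr_def)
  show ?case
  proof (cases "z \<in> set ps")
    case True
    then obtain as bs where asbs: "ps = (as @ [z]) @ bs" by (metis append_Cons append_Nil append_assoc split_list)
    have "hd (as @ [z]) = x" using ps(1,2) asbs by (cases as) auto
    moreover have "successively (R G) (as @ [z])" using ps(6) asbs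
      by (simp only: successively_append_iff)
    ultimately show ?thesis using ps asbs by (intro exI[of _ "as @ [z]"]) auto
  next
    case False
    have "successively (R G) (ps @ [z])" using ps z by (simp add: successively_append_iff)
    then show ?thesis using ps z False by (intro exI[of _ "ps @ [z]"]) auto
  qed
qed

lemma successively_nth:
  "successively P xs \<Longrightarrow> Suc i < length xs \<Longrightarrow> P (xs ! i) (xs ! Suc i)"
proof (induction xs arbitrary: i)
  case Nil then show ?case by simp
next
  case (Cons a xs)
  then show ?case
    by (cases i) (auto simp: successively_Cons hd_conv_nth)
qed

lemma tree_no_cycle:
  assumes "is_tree G" "set cs \<subseteq> V G" "distinct cs" "3 \<le> length cs" "successively (R G) cs"
    "R G (last cs) (hd cs)"
  shows False
proof -
  have "\<forall>i < length cs. R G (cs ! i) (cs ! ((i + 1) mod length cs))"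
  proof (intro allI impI)
    fix i assume i: "i < length cs"
    show "R G (cs ! i) (cs ! ((i + 1) mod length cs))"
    proof (cases "Suc i < length cs")
      case True then show ?thesis using successively_nth[OF assms(5)] by simp
    next
      case False
      then have "Suc i = length cs" using i by auto
      then have "i = length cs - 1" "(i + 1) mod length cs = 0" by auto
      moreover have "cs \<noteq> []" using assms(4) by auto
      ultimately show ?thesis using assms(6) by (simp add: last_conv_nth hd_conv_nth)
    qed
  qed
  then show False using assms(1-4) unfolding is_tree_def by blast
qed

lemma unique_cross_edge:
  assumes T: "is_tree G" and cA: "conn_set G A" and cB: "conn_set G B" and AB: "A \<inter> B = {}"
    and "a \<in> A" "a' \<in> A" "b \<in> B" "b' \<in> B" "R G a b" "R G a' b'"
  shows "b = b'"
proof (rule ccontr)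
  assume ne: "b \<noteq> b'"
  obtain pa where pa: "pa \<noteq> []" "hd pa = a" "last pa = a'" "distinct pa" "set pa \<subseteq> A"
      "successively (R G) pa"
    using simple_path[of G A a a'] cA assms(5,6) unfolding conn_set_def by blast
  obtain pb where pb: "pb \<noteq> []" "hd pb = b'" "last pb = b" "distinct pb" "set pb \<subseteq> B"
      "successively (R G) pb"
    using simple_path[of G B b' b] cB assms(7,8) unfolding conn_set_def by blast
  have "2 \<le> length pb"
  proof (cases pb)
    case Nil then show ?thesis using pb by simp
  next
    case (Cons y ys)
    then show ?thesis using pb ne by (cases ys) auto
  qed
  moreover have "1 \<le> length pa" using pa(1) by (cases pa) auto
  ultimately have len: "3 \<le> length (pa @ pb)" by simp
  have "set (pa @ pb) \<subseteq> V G" using pa(5) pb(5) cA cB unfolding conn_set_def by auto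
  moreover have "distinct (pa @ pb)" using pa pb AB by auto
  moreover have "successively (R G) (pa @ pb)" using pa pb assms(10)
    by (simp add: successively_append_iff)
  moreover have "R G (last (pa @ pb)) (hd (pa @ pb))" using pa pb assms(9) tree_sym[OF T] by simp
  ultimately show False using tree_no_cycle[OF T] len by blast
qed

lemma tgc_contra:
  assumes "tg_connected T Rel S" "A \<noteq> {}" "B \<noteq> {}" "A \<inter> B = {}" "A \<union> B = S"
    "closedin (subtopology T S) A" "closedin (subtopology T S) B" "\<forall>a\<in>A. \<forall>b\<in>B. \<not> Rel a b"
  shows False
  using assms unfolding tg_connected_def by blast

lemma abstract_endpoint:
  assumes symR: "\<And>a b. Rel a b \<Longrightarrow> Rel b a"
    and conn: "tg_connected T Rel S" and xS: "x \<in> S" and ST: "S \<subseteq> topspace T"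
    and sep: "\<And>p q. p \<in> S \<Longrightarrow> q \<in> S \<Longrightarrow> p \<noteq> x \<Longrightarrow> q \<noteq> x \<Longrightarrow>
       \<exists>U. openin T U \<and> closedin T U \<and> x \<in> U \<and> p \<notin> U \<and> q \<notin> U \<and>
          (\<forall>w w' z z'. w \<in> U \<inter> S \<and> w' \<in> U \<inter> S \<and> z \<in> S - U \<and> z' \<in> S - U \<and> Rel w z \<and> Rel w' z' \<longrightarrow> z = z')"
  shows "tg_connected T Rel (S - {x})"
proof -
  { fix P Q assume PQ: "P \<noteq> {}" "Q \<noteq> {}" "P \<inter> Q = {}" "P \<union> Q = S - {x}"
      "closedin (subtopology T (S - {x})) P" "closedin (subtopology T (S - {x})) Q"
      "\<forall>x\<in>P. \<forall>y\<in>Q. \<not> Rel x y"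
  obtain p q where pq: "p \<in> P" "q \<in> Q" using PQ(1,2) by blast
  obtain C1 where C1: "closedin T C1" "P = C1 \<inter> (S - {x})"
    using PQ(5) unfolding closedin_subtopology by blast
  obtain C2 where C2: "closedin T C2" "Q = C2 \<inter> (S - {x})"
    using PQ(6) unfolding closedin_subtopology by blast
  have "p \<in> S" "q \<in> S" "p \<noteq> x" "q \<noteq> x" using pq PQ(4) by auto
  from sep[OF this] obtain U where U: "openin T U" "closedin T U" "x \<in> U" "p \<notin> U" "q \<notin> U"
     and crossA: "\<forall>w w' z z'. w \<in> U \<inter> S \<and> w' \<in> U \<inter> S \<and> z \<in> S - U \<and> z' \<in> S - U \<and> Rel w z \<and> Rel w' z' \<longrightarrow> z = z'"
    by blast
  have cross: "\<And>w w' z z'. w \<in> U \<inter> S \<Longrightarrow> w' \<in> U \<inter> S \<Longrightarrow> z \<in> S - U \<Longrightarrow> z' \<in> S - U \<Longrightarrow> Rel w z \<Longrightarrow> Rel w' z' \<Longrightarrow> z = z'"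
    using crossA by blast
  have clU: "closedin (subtopology T S) (S \<inter> U)"
    unfolding closedin_subtopology using U(2) by blast
  have clnU: "closedin (subtopology T S) (S - U)"
  proof -
    have "closedin T (topspace T - U)" using U(1) by (simp add: closedin_diff)
    moreover have "S - U = (topspace T - U) \<inter> S" using ST by auto
    ultimately show ?thesis unfolding closedin_subtopology by blast
  qed
  have False
  proof (cases "\<exists>u v. u \<in> U \<inter> S \<and> v \<in> S - U \<and> Rel u v")
    case False
    have "S \<inter> U \<noteq> {}" "S - U \<noteq> {}" using xS U \<open>p \<in> S\<close> by auto
    moreover have "\<forall>a\<in>S \<inter> U. \<forall>b\<in>S - U. \<not> Rel a b" using False by blast
    ultimately show False using tgc_contra[OF conn, of "S \<inter> U" "S - U"] clU clnU by blast
  next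
    case True
    then obtain u v where uv: "u \<in> U \<inter> S" "v \<in> S - U" "Rel u v" by blast
    have key: False if H: "P1 \<inter> Q1 = {}" "P1 \<union> Q1 = S - {x}" "closedin T D1" "P1 = D1 \<inter> (S - {x})"
        "closedin T D2" "Q1 = D2 \<inter> (S - {x})" "\<forall>a\<in>P1. \<forall>b\<in>Q1. \<not> Rel a b" "v \<in> P1" "q1 \<in> Q1" "q1 \<notin> U"
      for P1 Q1 D1 D2 q1
    proof -
      have e1: "Q1 - U = (D2 \<inter> (topspace T - U)) \<inter> S" using H(6) ST U(3) by auto
      have "closedin T (D2 \<inter> (topspace T - U))"
        using H(5) U(1) by (simp add: closedin_Int closedin_diff)
      then have c1: "closedin (subtopology T S) (Q1 - U)"
        unfolding e1 closedin_subtopology by blast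
      have e2: "S - (Q1 - U) = (D1 \<union> U) \<inter> S" using H(1,2,4,6) U(3) by auto
      have "closedin T (D1 \<union> U)" using H(3) U(2) by (simp add: closedin_Un)
      then have c2: "closedin (subtopology T S) (S - (Q1 - U))"
        unfolding e2 closedin_subtopology by blast
      have ed: "\<forall>a\<in>Q1 - U. \<forall>b\<in>S - (Q1 - U). \<not> Rel a b"
      proof (intro ballI notI)
        fix a b assume a: "a \<in> Q1 - U" and b: "b \<in> S - (Q1 - U)" and r: "Rel a b"
        have aS: "a \<in> S" using a H(2) by auto
        show False
        proof (cases "b \<in> U")
          case True
          have "a = v" using cross[of b u a v] True b aS a uv symR[OF r] by auto
          then show False using a H(1,8) by auto
        next
          case False
          then have "b \<in> P1" using b H(2) U(3) by auto
          then show False using H(7) a symR[OF r] by auto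
        qed
      qed
      have "Q1 - U \<noteq> {}" "S - (Q1 - U) \<noteq> {}" using H(9,10) xS U(3) by auto
      moreover have "(Q1 - U) \<inter> (S - (Q1 - U)) = {}" "(Q1 - U) \<union> (S - (Q1 - U)) = S"
        using H(2) by auto
      ultimately show False using tgc_contra[OF conn, of "Q1 - U" "S - (Q1 - U)"] c1 c2 ed by blast
    qed
    have "v \<noteq> x" using uv U(3) by auto
    then have "v \<in> P \<or> v \<in> Q" using uv PQ(4) by auto
    then show False
    proof
      assume "v \<in> P"
      then show False using key[of P Q C1 C2 q] PQ(3,4,7) C1 C2 pq U(5) by blast
    next
      assume "v \<in> Q"
      moreover have "\<forall>a\<in>Q. \<forall>b\<in>P. \<not> Rel a b" using PQ(7) symR by blast
      ultimately show False using key[of Q P C2 C1 p] PQ(3,4) C1 C2 pq U(4) by blast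
    qed
  qed
  }
  then show ?thesis unfolding tg_connected_def by blast
qed


lemma fs_obj: "fraisse_seq P F f \<Longrightarrow> is_obj P (F n)" unfolding fraisse_seq_def by blast
lemma fs_arr: "fraisse_seq P F f \<Longrightarrow> n \<le> m \<Longrightarrow> is_arrow P (F m) (F n) (f m n)"
  unfolding fraisse_seq_def by blast
lemma fs_id: "fraisse_seq P F f \<Longrightarrow> x \<in> V (F n) \<Longrightarrow> pm (f n n) x = x"
  unfolding fraisse_seq_def arr_eq_def id_arrow_def by auto
lemma fs_comp_pm: "fraisse_seq P F f \<Longrightarrow> n \<le> m \<Longrightarrow> m \<le> k \<Longrightarrow> x \<in> V (F k) \<Longrightarrow>
    pm (f k n) x = pm (f m n) (pm (f k m) x)"
  unfolding fraisse_seq_def arr_eq_def comp_def by auto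
lemma fs_comp_em: "fraisse_seq P F f \<Longrightarrow> n \<le> m \<Longrightarrow> m \<le> k \<Longrightarrow> y \<in> Ends (F n) \<Longrightarrow>
    em (f k n) y = em (f k m) (em (f m n) y)"
  unfolding fraisse_seq_def arr_eq_def comp_def by auto
lemma obj_tree: "is_obj P A \<Longrightarrow> is_tree A" unfolding is_obj_def by blast
lemma arrow_mono: "is_arrow P B A g \<Longrightarrow> mono_epi B A (pm g)"
  unfolding is_arrow_def weakly_coherent_def by blast
lemma arrow_V: "is_arrow P B A g \<Longrightarrow> x \<in> V B \<Longrightarrow> pm g x \<in> V A"
  unfolding is_arrow_def weakly_coherent_def mono_epi_def epi_def by blast
lemma arrow_em: "is_arrow P B A g \<Longrightarrow> y \<in> Ends A \<Longrightarrow> em g y \<in> Ends B \<and> pm g (em g y) = y"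
  unfolding is_arrow_def by blast
lemma Ends_V: "Ends G \<subseteq> V G" unfolding Ends_def by auto

lemma flim_proj:
  assumes fs: "fraisse_seq P F f" and x: "x \<in> Flim F f" and il: "i \<le> l"
  shows "pm (f l i) (x l) = x i"
  using il
proof (induction l rule: dec_induct)
  case base then show ?case using fs_id[OF fs] x unfolding Flim_def by auto
next
  case (step l)
  have "pm (f (Suc l) i) (x (Suc l)) = pm (f l i) (pm (f (Suc l) l) (x (Suc l)))"
    using fs_comp_pm[OF fs, of i l "Suc l" "x (Suc l)"] step x unfolding Flim_def by auto
  also have "\<dots> = pm (f l i) (x l)" using x unfolding Flim_def by auto
  finally show ?case using step by simp
qed

definition eseq :: "(nat \<Rightarrow> nat \<Rightarrow> arrow) \<Rightarrow> nat \<Rightarrow> nat \<Rightarrow> nat \<Rightarrow> nat" where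
  "eseq f m y = (\<lambda>i. if i < m then pm (f m i) y else if i = m then y else em (f i m) y)"

lemma Elim_eq: "Elim F f = {eseq f m y | m y. y \<in> Ends (F m)}"
  unfolding Elim_def eseq_def by blast

lemma eseq_flim:
  assumes fs: "fraisse_seq P F f" and y: "y \<in> Ends (F m)"
  shows "eseq f m y \<in> Flim F f"
  unfolding Flim_def
proof (intro CollectI allI conjI)
  have yV: "y \<in> V (F m)" using y Ends_V by blast
  fix i
  show "eseq f m y i \<in> V (F i)"
  proof -
    consider "i < m" | "i = m" | "m < i" by linarith
    then show ?thesis
    proof cases
      case 1 then show ?thesis using arrow_V[OF fs_arr[OF fs, of i m] yV] by (simp add: eseq_def)
    next
      case 2 then show ?thesis using yV by (simp add: eseq_def)
    next
      case 3 then show ?thesis using arrow_em[OF fs_arr[OF fs, of m i] y] Ends_V by (auto simp: eseq_def)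
    qed
  qed
  show "pm (f (Suc i) i) (eseq f m y (Suc i)) = eseq f m y i"
  proof -
    consider "Suc i < m" | "Suc i = m" | "i = m" | "m < i" by linarith
    then show ?thesis
    proof cases
      case 1 then show ?thesis using fs_comp_pm[OF fs, of i "Suc i" m y] yV by (simp add: eseq_def)
    next
      case 2 then show ?thesis by (simp add: eseq_def)
    next
      case 3 then show ?thesis using arrow_em[OF fs_arr[OF fs, of m "Suc m"] y] by (simp add: eseq_def)
    next
      case 4
      have e: "em (f (Suc i) m) y = em (f (Suc i) i) (em (f i m) y)"
        using fs_comp_em[OF fs, of m i "Suc i" y] 4 y by simp
      have "em (f i m) y \<in> Ends (F i)" using arrow_em[OF fs_arr[OF fs, of m i] y] 4 by simp
      then show ?thesis using 4 e arrow_em[OF fs_arr[OF fs, of i "Suc i"]] by (simp add: eseq_def)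
    qed
  qed
qed

lemma eseq_ends:
  assumes fs: "fraisse_seq P F f" and y: "y \<in> Ends (F m)" and k: "m \<le> k"
  shows "eseq f m y k \<in> Ends (F k)"
proof (cases "k = m")
  case True then show ?thesis using y by (simp add: eseq_def)
next
  case False then show ?thesis using arrow_em[OF fs_arr[OF fs k] y] k by (simp add: eseq_def)
qed

lemma Elim_sub: "fraisse_seq P F f \<Longrightarrow> Elim F f \<subseteq> Flim F f"
  unfolding Elim_eq using eseq_flim by blast

lemma topspace_Ftop: "topspace (Ftop F f) = Flim F f"
  unfolding Ftop_def Flim_def by (auto simp: PiE_iff)

lemma Rlim_sym: "fraisse_seq P F f \<Longrightarrow> Rlim F a b \<Longrightarrow> Rlim F b a"
  unfolding Rlim_def using tree_sym obj_tree fs_obj by metis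

lemma end_nbr_unique:
  assumes T: "is_tree G" and t: "t \<in> Ends G" and "R G t a" "R G t b" "a \<noteq> t" "b \<noteq> t"
  shows "a = b"
proof -
  have "card {y \<in> V G. y \<noteq> t \<and> R G t y} = 1" using t unfolding Ends_def ord_def by auto
  then obtain z where z: "{y \<in> V G. y \<noteq> t \<and> R G t y} = {z}" by (meson card_1_singletonE)
  have "a \<in> V G" "b \<in> V G" using tree_V[OF T] assms(3,4) by auto
  then have "a \<in> {z}" "b \<in> {z}" using z assms(3-6) by blast+
  then show ?thesis by simp
qed

lemma conn_single: "v \<in> V G \<Longrightarrow> conn_set G {v}"
  unfolding conn_set_def by auto

lemma cross_unique_limit:
  assumes fs: "fraisse_seq P F f" and x: "x \<in> Flim F f" and xe: "x k \<in> Ends (F k)"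
    and w: "w \<in> Flim F f" "w k = x k" and w': "w' \<in> Flim F f" "w' k = x k"
    and z: "z \<in> Flim F f" "z k \<noteq> x k" and z': "z' \<in> Flim F f" "z' k \<noteq> x k"
    and r: "Rlim F w z" and r': "Rlim F w' z'"
  shows "z = z'"
proof -
  have Tk: "is_tree (F k)" using obj_tree fs_obj fs by blast
  have zk: "z k = z' k"
    using end_nbr_unique[OF Tk xe, of "z k" "z' k"] r r' w w' z z' unfolding Rlim_def by metis
  show ?thesis
  proof
    fix l
    show "z l = z' l"
    proof (cases "l \<le> k")
      case True
      then show ?thesis using flim_proj[OF fs z(1) True] flim_proj[OF fs z'(1) True] zk by metis
    next
      case False
      then have kl: "k \<le> l" by simp
      let ?g = "pm (f l k)"
      have Tl: "is_tree (F l)" using obj_tree fs_obj fs by blast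
      have me: "mono_epi (F l) (F k) ?g" using arrow_mono fs_arr[OF fs kl] by blast
      have xV: "x k \<in> V (F k)" "z k \<in> V (F k)" using x z unfolding Flim_def by auto
      have cA: "conn_set (F l) (preim (F l) ?g {x k})"
        using me conn_single[OF xV(1)] unfolding mono_epi_def by blast
      have cB: "conn_set (F l) (preim (F l) ?g {z k})"
        using me conn_single[OF xV(2)] unfolding mono_epi_def by blast
      have AB: "preim (F l) ?g {x k} \<inter> preim (F l) ?g {z k} = {}"
        using z(2) unfolding preim_def by auto
      have inA: "w l \<in> preim (F l) ?g {x k}" "w' l \<in> preim (F l) ?g {x k}"
        using flim_proj[OF fs w(1) kl] flim_proj[OF fs w'(1) kl] w w' unfolding preim_def Flim_def by auto
      have inB: "z l \<in> preim (F l) ?g {z k}" "z' l \<in> preim (F l) ?g {z k}"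
        using flim_proj[OF fs z(1) kl] flim_proj[OF fs z'(1) kl] zk z z' unfolding preim_def Flim_def by auto
      show ?thesis
        using unique_cross_edge[OF Tl cA cB AB inA(1) inA(2) inB(1) inB(2)] r r' unfolding Rlim_def by blast
    qed
  qed
qed

lemma proj_clopen:
  assumes "v \<in> V (F k)"
  shows "openin (Ftop F f) {z \<in> Flim F f. z k = v} \<and> closedin (Ftop F f) {z \<in> Flim F f. z k = v}"
proof -
  have cm: "continuous_map (Ftop F f) (discrete_topology (V (F k))) (\<lambda>z. z k)"
    unfolding Ftop_def
    using continuous_map_from_subtopology[OF continuous_map_product_projection[of k UNIV "\<lambda>i. discrete_topology (V (F i))"]]
    by simp
  have e: "{z \<in> topspace (Ftop F f). z k \<in> {v}} = {z \<in> Flim F f. z k = v}"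
    using topspace_Ftop by auto
  show ?thesis
    using openin_continuous_map_preimage[OF cm, of "{v}"] closedin_continuous_map_preimage[OF cm, of "{v}"]
      assms unfolding e by simp
qed

lemma flim_diff:
  assumes fs: "fraisse_seq P F f" and "p \<in> Flim F f" "x \<in> Flim F f" "p i \<noteq> x i" "i \<le> k"
  shows "p k \<noteq> x k"
  using flim_proj[OF fs assms(2) assms(5)] flim_proj[OF fs assms(3) assms(5)] assms(4) by metis

lemma sep_lemma:
  assumes fs: "fraisse_seq P F f" and y: "y \<in> Ends (F m)" and xy: "x = eseq f m y"
    and SF: "S \<subseteq> Flim F f" and pq: "p \<in> S" "q \<in> S" "p \<noteq> x" "q \<noteq> x"
  shows "\<exists>U. openin (Ftop F f) U \<and> closedin (Ftop F f) U \<and> x \<in> U \<and> p \<notin> U \<and> q \<notin> U \<and>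
          (\<forall>w w' z z'. w \<in> U \<inter> S \<and> w' \<in> U \<inter> S \<and> z \<in> S - U \<and> z' \<in> S - U \<and> Rlim F w z \<and> Rlim F w' z' \<longrightarrow> z = z')"
proof -
  have xF: "x \<in> Flim F f" using eseq_flim[OF fs y] xy by simp
  obtain i1 where i1: "p i1 \<noteq> x i1" using pq(3) by (meson ext)
  obtain i2 where i2: "q i2 \<noteq> x i2" using pq(4) by (meson ext)
  define k where "k = max m (max i1 i2)"
  have k1: "i1 \<le> k" "i2 \<le> k" "m \<le> k" unfolding k_def by auto
  have pF: "p \<in> Flim F f" "q \<in> Flim F f" using pq(1,2) SF by auto
  have pk: "p k \<noteq> x k" using flim_diff[where p=p and x=x and i=i1 and k=k, OF fs pF(1) xF i1 k1(1)] .
  have qk: "q k \<noteq> x k" using flim_diff[where p=q and x=x and i=i2 and k=k, OF fs pF(2) xF i2 k1(2)] .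
  have xk: "x k \<in> Ends (F k)" using eseq_ends[OF fs y k1(3)] xy by simp
  have xkV: "x k \<in> V (F k)" using xF unfolding Flim_def by auto
  define U where "U = {z \<in> Flim F f. z k = x k}"
  have oc: "openin (Ftop F f) U" "closedin (Ftop F f) U"
    using proj_clopen[where F=F and k=k and v="x k" and f=f, OF xkV] unfolding U_def by auto
  have mem: "x \<in> U" "p \<notin> U" "q \<notin> U" using xF pk qk unfolding U_def by auto
  have cr: "\<forall>w w' z z'. w \<in> U \<inter> S \<and> w' \<in> U \<inter> S \<and> z \<in> S - U \<and> z' \<in> S - U \<and> Rlim F w z \<and> Rlim F w' z' \<longrightarrow> z = z'"
  proof (intro allI impI)
    fix w w' z z'
    assume H: "w \<in> U \<inter> S \<and> w' \<in> U \<inter> S \<and> z \<in> S - U \<and> z' \<in> S - U \<and> Rlim F w z \<and> Rlim F w' z'"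
    have a: "w \<in> Flim F f" "w k = x k" "w' \<in> Flim F f" "w' k = x k" using H unfolding U_def by auto
    have b: "z \<in> Flim F f" "z k \<noteq> x k" "z' \<in> Flim F f" "z' k \<noteq> x k" using H SF unfolding U_def by auto
    show "z = z'" using cross_unique_limit[OF fs xF xk a b] H by blast
  qed
  show ?thesis using oc mem cr by blast
qed

lemma elim_endpoint:
  assumes fs: "fraisse_seq P F f" and xE: "x \<in> Elim F f"
  shows "tg_endpoint (Ftop F f) (Rlim F) x"
proof -
  obtain m y where y: "y \<in> Ends (F m)" and xy: "x = eseq f m y" using xE unfolding Elim_eq by blast
  have xF: "x \<in> Flim F f" using eseq_flim[OF fs y] xy by simp
  have symR: "\<And>a b. Rlim F a b \<Longrightarrow> Rlim F b a" using Rlim_sym[OF fs] by blast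
  have main: "tg_connected (Ftop F f) (Rlim F) (S - {x})"
    if SA: "tg_arc (Ftop F f) (Rlim F) S" "x \<in> S" for S
  proof -
    have ST: "S \<subseteq> topspace (Ftop F f)" and cS: "tg_connected (Ftop F f) (Rlim F) S"
      using SA unfolding tg_arc_def by auto
    have SF: "S \<subseteq> Flim F f" using ST topspace_Ftop by simp
    show ?thesis
      using abstract_endpoint[OF symR cS SA(2) ST sep_lemma[OF fs y xy SF]] by blast
  qed
  show ?thesis unfolding tg_endpoint_def tg_cut_def
    using xF topspace_Ftop main by blast
qed


definition cls :: "ltree \<Rightarrow> nat \<Rightarrow> nat \<Rightarrow> nat set" where
  "cls G a x = {y \<in> V G - {a}. (restr G (V G - {a}))\<^sup>*\<^sup>* x y}"

lemma comps_cls: "comps G a = {C. \<exists>x\<in>V G - {a}. C = cls G a x}"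
  by (simp add: comps_def cls_def)

lemma restr_sym: "(\<And>p q. R G p q \<Longrightarrow> R G q p) \<Longrightarrow> restr G S p q \<Longrightarrow> restr G S q p"
  unfolding restr_def by blast

lemma cls_eq:
  assumes sym: "\<And>p q. R G p q \<Longrightarrow> R G q p" and y: "y \<in> cls G a x"
  shows "cls G a y = cls G a x"
proof -
  have xy: "(restr G (V G - {a}))\<^sup>*\<^sup>* x y" using y unfolding cls_def by auto
  have yx: "(restr G (V G - {a}))\<^sup>*\<^sup>* y x"
    using rtranclp_sym_lemma[OF restr_sym[OF sym] xy] by blast
  show ?thesis unfolding cls_def
    using xy yx by (auto intro: rtranclp_trans)
qed

lemma cls_self: "x \<in> V G - {a} \<Longrightarrow> x \<in> cls G a x"
  unfolding cls_def by auto

lemma restr_mono_rt: "S \<subseteq> S' \<Longrightarrow> (restr G S)\<^sup>*\<^sup>* x y \<Longrightarrow> (restr G S')\<^sup>*\<^sup>* x y"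
proof -
  assume "S \<subseteq> S'" "(restr G S)\<^sup>*\<^sup>* x y"
  moreover have "restr G S \<le> restr G S'" using \<open>S \<subseteq> S'\<close> unfolding restr_def by auto
  ultimately show ?thesis using rtranclp_mono by blast
qed

definition cycP :: "('a \<Rightarrow> 'a \<Rightarrow> bool) \<Rightarrow> 'a list \<Rightarrow> bool" where
  "cycP Rel cs \<longleftrightarrow> (\<forall>i<length cs. Rel (cs ! i) (cs ! ((i + 1) mod length cs)))"

lemma cycP_rotate: "cycP Rel cs \<Longrightarrow> cycP Rel (rotate k cs)"
  unfolding cycP_def
proof (intro allI impI)
  fix i assume H: "\<forall>i<length cs. Rel (cs ! i) (cs ! ((i + 1) mod length cs))" and i: "i < length (rotate k cs)"
  let ?n = "length cs"
  have n: "0 < ?n" using i by (metis length_rotate less_nat_zero_code neq0_conv)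
  have a: "rotate k cs ! i = cs ! ((k + i) mod ?n)" using i by (simp add: nth_rotate)
  have b: "rotate k cs ! ((i + 1) mod ?n) = cs ! ((k + (i + 1) mod ?n) mod ?n)"
    using n by (simp add: nth_rotate)
  have c: "(k + (i + 1) mod ?n) mod ?n = ((k + i) mod ?n + 1) mod ?n"
    by (simp add: mod_simps)
  show "Rel (rotate k cs ! i) (rotate k cs ! ((i + 1) mod length (rotate k cs)))"
    using H[rule_format, of "(k + i) mod ?n"] n a b c by simp
qed

lemma cycP_last:
  assumes "cycP Rel cs" "3 \<le> length cs"
  shows "Rel (cs ! (length cs - 2)) (cs ! (length cs - 1)) \<and> Rel (cs ! (length cs - 1)) (cs ! 0)"
proof -
  have "(length cs - 2 + 1) mod length cs = length cs - 1" using assms(2) by simp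
  moreover have "(length cs - 1 + 1) mod length cs = 0"
  proof -
    have "length cs - 1 + 1 = length cs" using assms(2) by simp
    then show ?thesis by simp
  qed
  ultimately show ?thesis using assms unfolding cycP_def
    by (metis diff_less le_trans less_numeral_extra(1) order_less_le_trans zero_less_numeral
        diff_le_self not_numeral_le_zero zero_less_diff)
qed

lemma rotate_to_last: "j < length cs \<Longrightarrow> rotate (Suc j) cs ! (length cs - 1) = cs ! j"
proof -
  assume j: "j < length cs"
  then have "Suc j + (length cs - 1) = j + length cs" by simp
  then have "(Suc j + (length cs - 1)) mod length cs = j" using j by simp
  moreover have "length cs - 1 < length cs" using j by simp
  ultimately show ?thesis using nth_rotate[of "length cs - 1" cs "Suc j"] by simp
qed

lemma successively_from_nth:
  "(\<And>i. Suc i < length xs \<Longrightarrow> P (xs ! i) (xs ! Suc i)) \<Longrightarrow> successively P xs"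
proof (induction xs)
  case Nil then show ?case by simp
next
  case (Cons a xs)
  have "successively P xs" using Cons.prems by (intro Cons.IH) force
  moreover have "xs \<noteq> [] \<Longrightarrow> P a (hd xs)" using Cons.prems[of 0] by (simp add: hd_conv_nth)
  ultimately show ?case by (auto simp: successively_Cons)
qed

lemma tree_no_cycP:
  assumes "is_tree G" "set cs \<subseteq> V G" "distinct cs" "3 \<le> length cs" "cycP (R G) cs" shows False
  using assms unfolding is_tree_def cycP_def by blast

lemma two_elems: "finite A \<Longrightarrow> 2 \<le> card A \<Longrightarrow> \<exists>x y. x \<in> A \<and> y \<in> A \<and> x \<noteq> y"
  by (metis card_2_iff' card_le_Suc_iff numeral_2_eq_2 insertCI)


locale extc =
  fixes P :: "enat set" and G :: ltree and v c :: nat and p0 :: enat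
  assumes P3: "\<forall>p\<in>P. 3 \<le> p" and obj: "is_obj P G" and vV: "v \<in> V G" and v3: "3 \<le> ord G v"
    and cv: "R G v c" and cnv: "c \<noteq> v" and p0: "lab G v = Some p0" "p0 \<in> P"
begin

definition wN :: nat where "wN = Suc (Max (V G))"
definition eN :: nat where "eN = Suc wN"

definition RY :: "nat \<Rightarrow> nat \<Rightarrow> bool" where
  "RY a b \<longleftrightarrow> (R G a b \<and> \<not> (a = v \<and> b = c) \<and> \<not> (a = c \<and> b = v))
     \<or> (a = v \<and> b = wN) \<or> (a = wN \<and> b = v) \<or> (a = wN \<and> b = c) \<or> (a = c \<and> b = wN)
     \<or> (a = wN \<and> b = eN) \<or> (a = eN \<and> b = wN) \<or> (a = wN \<and> b = wN) \<or> (a = eN \<and> b = eN)"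

definition Y :: ltree where
  "Y = \<lparr>V = insert wN (insert eN (V G)), R = RY, lab = (lab G)(wN := Some p0, eN := None)\<rparr>"

definition g :: "nat \<Rightarrow> nat" where "g x = (if x = wN \<or> x = eN then v else x)"
definition rho :: "nat \<Rightarrow> nat" where "rho x = (if x = wN \<or> x = eN then c else x)"

lemma T: "is_tree G" using obj obj_tree by blast
lemma finG: "finite (V G)" using T unfolding is_tree_def by blast
lemma RV: "R G a b \<Longrightarrow> a \<in> V G \<and> b \<in> V G" using tree_V[OF T] by blast
lemma Rsym: "R G a b \<Longrightarrow> R G b a" using tree_sym[OF T] by blast
lemma Rrefl: "a \<in> V G \<Longrightarrow> R G a a" using T unfolding is_tree_def by blast
lemma cV: "c \<in> V G" using RV cv by blast
lemma wN_notin: "wN \<notin> V G"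
  using Max_ge[OF finG] unfolding wN_def by (metis Suc_n_not_le_n)
lemma eN_notin: "eN \<notin> V G"
  using Max_ge[OF finG] unfolding eN_def wN_def by (metis Suc_n_not_le_n le_SucI)
lemma wN_eN: "wN \<noteq> eN" unfolding eN_def by simp

lemma VY: "V Y = insert wN (insert eN (V G))" by (simp add: Y_def)
lemma RY_eq: "R Y = RY" by (simp add: Y_def)

lemma RY_old: "a \<in> V G \<Longrightarrow> b \<in> V G \<Longrightarrow> RY a b \<longleftrightarrow> R G a b \<and> \<not> (a = v \<and> b = c) \<and> \<not> (a = c \<and> b = v)"
  using wN_notin eN_notin unfolding RY_def by auto

lemma RY_w: "RY wN b \<longleftrightarrow> b = v \<or> b = c \<or> b = eN \<or> b = wN"
  using wN_notin eN_notin vV cV wN_eN RV unfolding RY_def by auto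
lemma RY_w2: "RY b wN \<longleftrightarrow> b = v \<or> b = c \<or> b = eN \<or> b = wN"
  using wN_notin eN_notin vV cV wN_eN RV unfolding RY_def by auto
lemma RY_e: "RY eN b \<longleftrightarrow> b = wN \<or> b = eN"
  using wN_notin eN_notin vV cV wN_eN RV unfolding RY_def by auto
lemma RY_e2: "RY b eN \<longleftrightarrow> b = wN \<or> b = eN"
  using wN_notin eN_notin vV cV wN_eN RV unfolding RY_def by auto

lemma RY_sym: "RY a b \<Longrightarrow> RY b a"
  using Rsym unfolding RY_def by blast

lemma RY_V: "RY a b \<Longrightarrow> a \<in> V Y \<and> b \<in> V Y"
  using RV vV cV unfolding RY_def VY by blast

lemma g_V: "x \<in> V Y \<Longrightarrow> g x \<in> V G" using vV unfolding VY g_def by auto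
lemma g_old: "x \<in> V G \<Longrightarrow> g x = x" using wN_notin eN_notin unfolding g_def by auto

definition NB :: "ltree \<Rightarrow> nat \<Rightarrow> nat set" where "NB H a = {y \<in> V H. y \<noteq> a \<and> R H a y}"

lemma ord_NB: "ord H a = card (NB H a)" unfolding ord_def NB_def by simp

lemma finY: "finite (V Y)" using finG unfolding VY by simp

lemma NB_other: "a \<in> V G \<Longrightarrow> a \<noteq> v \<Longrightarrow> a \<noteq> c \<Longrightarrow> NB Y a = NB G a"
  unfolding NB_def VY RY_eq using RY_old RY_w2 RY_e2 wN_notin eN_notin by auto

lemma NB_v: "NB Y v = insert wN (NB G v - {c})"
  unfolding NB_def VY RY_eq using RY_old RY_w2 RY_e2 wN_notin eN_notin vV cnv wN_eN cV
  by auto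

lemma NB_c: "NB Y c = insert wN (NB G c - {v})"
  unfolding NB_def VY RY_eq using RY_old RY_w2 RY_e2 wN_notin eN_notin vV cnv wN_eN cV
  by auto

lemma NB_w: "NB Y wN = {v, c, eN}"
  unfolding NB_def VY RY_eq using RY_w wN_notin eN_notin vV cnv wN_eN cV by auto

lemma NB_e: "NB Y eN = {wN}"
  unfolding NB_def VY RY_eq using RY_e wN_notin eN_notin vV cnv wN_eN cV by auto

lemma finNB: "finite (NB G a)" using finG unfolding NB_def by simp

lemma ord_Y_old: "a \<in> V G \<Longrightarrow> ord Y a = ord G a"
proof -
  assume a: "a \<in> V G"
  consider "a = v" | "a = c" | "a \<noteq> v" "a \<noteq> c" by blast
  then show ?thesis
  proof cases
    case 1
    have "c \<in> NB G v" unfolding NB_def using cv cV cnv by auto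
    moreover have "wN \<notin> NB G v - {c}" using wN_notin unfolding NB_def by auto
    moreover have "0 < card (NB G v)" using finNB[of v] \<open>c \<in> NB G v\<close> card_gt_0_iff by blast
    ultimately show ?thesis unfolding ord_NB 1 NB_v using finNB[of v]
      by (simp add: card_insert_disjoint card_Diff_singleton)
  next
    case 2
    have "v \<in> NB G c" unfolding NB_def using cv vV cnv Rsym by auto
    moreover have "wN \<notin> NB G c - {v}" using wN_notin unfolding NB_def by auto
    moreover have "0 < card (NB G c)" using finNB[of c] \<open>v \<in> NB G c\<close> card_gt_0_iff by blast
    ultimately show ?thesis unfolding ord_NB 2 NB_c using finNB[of c]
      by (simp add: card_insert_disjoint card_Diff_singleton)
  next
    case 3 then show ?thesis using a NB_other ord_NB by simp
  qed
qed

lemma ord_Y_w: "ord Y wN = 3"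
proof -
  have "eN \<noteq> v" "eN \<noteq> c" using eN_notin vV cV by auto
  then show ?thesis unfolding ord_NB NB_w using cnv by simp
qed

lemma ord_Y_e: "ord Y eN = 1"
  unfolding ord_NB NB_e by simp


lemma preim_sub: "preim Y g S \<subseteq> V Y" unfolding preim_def by auto
lemma preim_old: "x \<in> V G \<Longrightarrow> x \<in> S \<Longrightarrow> x \<in> preim Y g S"
  unfolding preim_def VY using g_old by auto
lemma preim_w: "v \<in> S \<Longrightarrow> wN \<in> preim Y g S" unfolding preim_def VY g_def by auto
lemma preim_e: "v \<in> S \<Longrightarrow> eN \<in> preim Y g S" unfolding preim_def VY g_def by auto

lemma lift_edge:
  assumes S: "S \<subseteq> V G" and r: "restr G S a b"
  shows "(restr Y (preim Y g S))\<^sup>*\<^sup>* a b"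
proof -
  have ab: "a \<in> S" "b \<in> S" "R G a b" using r unfolding restr_def by auto
  have abP: "a \<in> preim Y g S" "b \<in> preim Y g S" using ab S preim_old by auto
  show ?thesis
  proof (cases "(a = v \<and> b = c) \<or> (a = c \<and> b = v)")
    case True
    then have "v \<in> S" using ab by auto
    then have wP: "wN \<in> preim Y g S" by (rule preim_w)
    have "restr Y (preim Y g S) a wN" "restr Y (preim Y g S) wN b"
      using True abP wP unfolding restr_def RY_eq RY_def by auto
    then show ?thesis by (meson rtranclp.rtrancl_into_rtrancl rtranclp.rtrancl_refl)
  next
    case False
    then have "RY a b" using RY_old ab S by auto
    then have "restr Y (preim Y g S) a b" using abP unfolding restr_def RY_eq by auto
    then show ?thesis by blast
  qed
qed

lemma lift:
  assumes S: "S \<subseteq> V G" and r: "(restr G S)\<^sup>*\<^sup>* a b"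
  shows "(restr Y (preim Y g S))\<^sup>*\<^sup>* a b"
  using r
proof (induction rule: rtranclp_induct)
  case base then show ?case by simp
next
  case (step y z)
  then show ?case using lift_edge[OF S step(2)] by (meson rtranclp_trans)
qed

lemma restrY_sym: "restr Y S p q \<Longrightarrow> restr Y S q p"
  using RY_sym unfolding restr_def RY_eq by blast

lemma to_g:
  assumes x: "x \<in> preim Y g S"
  shows "(restr Y (preim Y g S))\<^sup>*\<^sup>* x (g x)"
proof -
  have xV: "x \<in> V Y" using x preim_sub by auto
  consider "x \<in> V G" | "x = wN" | "x = eN" using xV unfolding VY by auto
  then show ?thesis
  proof cases
    case 1 then show ?thesis using g_old by simp
  next
    case 2
    then have vS: "v \<in> S" using x unfolding preim_def g_def by auto
    have "restr Y (preim Y g S) wN v"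
      using preim_w[OF vS] preim_old[OF vV vS] unfolding restr_def RY_eq RY_def by auto
    then show ?thesis using 2 by (simp add: g_def)
  next
    case 3
    then have vS: "v \<in> S" using x unfolding preim_def g_def by auto
    have "restr Y (preim Y g S) eN wN" "restr Y (preim Y g S) wN v"
      using preim_w[OF vS] preim_e[OF vS] preim_old[OF vV vS] unfolding restr_def RY_eq RY_def by auto
    then show ?thesis using 3 by (simp add: g_def)
  qed
qed

lemma mono_Y:
  assumes cS: "conn_set G S"
  shows "conn_set Y (preim Y g S)"
  unfolding conn_set_def
proof (intro conjI ballI)
  show "preim Y g S \<subseteq> V Y" by (rule preim_sub)
  have S: "S \<subseteq> V G" using cS unfolding conn_set_def by auto
  fix x y assume x: "x \<in> preim Y g S" and y: "y \<in> preim Y g S"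
  have gx: "g x \<in> S" "g y \<in> S" using x y unfolding preim_def by auto
  have "(restr G S)\<^sup>*\<^sup>* (g x) (g y)" using cS gx unfolding conn_set_def by auto
  then have m: "(restr Y (preim Y g S))\<^sup>*\<^sup>* (g x) (g y)" using lift[OF S] by blast
  have l: "(restr Y (preim Y g S))\<^sup>*\<^sup>* x (g x)" using to_g[OF x] .
  have r: "(restr Y (preim Y g S))\<^sup>*\<^sup>* (g y) y"
    using rtranclp_sym_lemma[OF restrY_sym to_g[OF y]] .
  show "(restr Y (preim Y g S))\<^sup>*\<^sup>* x y" using l m r by (meson rtranclp_trans)
qed

lemma preim_all: "preim Y g (V G) = V Y"
  unfolding preim_def using g_V by auto

lemma connG: "conn_set G (V G)" using T unfolding is_tree_def by blast

lemma acyclic_Y: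
  assumes len: "3 \<le> length cs" and dist: "distinct cs" and sub: "set cs \<subseteq> V Y" and cyc: "cycP RY cs"
  shows False
proof -
  let ?n = "length cs"
  have rot: "\<And>j. j < ?n \<Longrightarrow> cycP RY (rotate (Suc j) cs) \<and> distinct (rotate (Suc j) cs)
      \<and> length (rotate (Suc j) cs) = ?n \<and> set (rotate (Suc j) cs) = set cs
      \<and> rotate (Suc j) cs ! (?n - 1) = cs ! j"
    using cycP_rotate[OF cyc] rotate_to_last dist by (simp del: rotate_Suc)
  have idx: "?n - 2 < ?n" "?n - 1 < ?n" "0 < ?n" "?n - 2 \<noteq> ?n - 1" "?n - 2 \<noteq> 0" "?n - 1 \<noteq> 0" using len by auto
  show False
  proof (cases "eN \<in> set cs")
    case True
    then obtain j where j: "j < ?n" "cs ! j = eN" by (meson in_set_conv_nth)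
    define ds where "ds = rotate (Suc j) cs"
    have ds: "cycP RY ds" "distinct ds" "length ds = ?n" "ds ! (?n - 1) = eN"
      using rot[OF j(1)] j unfolding ds_def by auto
    have "RY (ds ! (?n - 2)) eN" "RY eN (ds ! 0)" using cycP_last[OF ds(1)] ds len by auto
    then have "ds ! (?n - 2) \<in> {wN, eN}" "ds ! 0 \<in> {wN, eN}" using RY_e RY_e2 by auto
    moreover have "ds ! (?n - 2) \<noteq> ds ! (?n - 1)" "ds ! 0 \<noteq> ds ! (?n - 1)" "ds ! (?n - 2) \<noteq> ds ! 0"
      using ds(2,3) idx by (simp_all add: nth_eq_iff_index_eq)
    ultimately show False using ds(4) by auto
  next
    case noe: False
    show False
    proof (cases "wN \<in> set cs")
      case True
      then obtain j where j: "j < ?n" "cs ! j = wN" by (meson in_set_conv_nth)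
      define ds where "ds = rotate (Suc j) cs"
      have ds: "cycP RY ds" "distinct ds" "length ds = ?n" "ds ! (?n - 1) = wN" "set ds = set cs"
        using rot[OF j(1)] j unfolding ds_def by auto
      define a where "a = ds ! (?n - 2)"
      define b where "b = ds ! 0"
      have "RY a wN" "RY wN b" using cycP_last[OF ds(1)] ds len unfolding a_def b_def by auto
      moreover have "ds ! (?n - 2) \<noteq> ds ! (?n - 1)" "ds ! 0 \<noteq> ds ! (?n - 1)" "ds ! (?n - 2) \<noteq> ds ! 0"
        using ds(2,3) idx by (simp_all add: nth_eq_iff_index_eq)
      then have "a \<noteq> wN" "b \<noteq> wN" "a \<noteq> b" using ds(4) unfolding a_def b_def by auto
      moreover have "a \<noteq> eN" "b \<noteq> eN" using noe ds(3,5) idx unfolding a_def b_def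
        by (metis nth_mem)+
      ultimately have ab: "(a = v \<and> b = c) \<or> (a = c \<and> b = v)" using RY_w RY_w2 by auto
      define bs where "bs = butlast ds"
      have lbs: "length bs = ?n - 1" unfolding bs_def using ds(3) by simp
      have bsn: "\<And>i. i < ?n - 1 \<Longrightarrow> bs ! i = ds ! i" unfolding bs_def using ds(3)
        by (simp add: nth_butlast)
      have "ds = bs @ [wN]" unfolding bs_def using ds(3,4) len
        by (metis append_butlast_last_id last_conv_nth length_0_conv not_numeral_le_zero)
      then have bsV: "set bs \<subseteq> V G" using ds(2,5) sub noe by (auto simp: VY)
      have dbs: "distinct bs" using ds(2) unfolding bs_def by (simp add: distinct_butlast)
      have cons: "\<And>i. Suc i < ?n \<Longrightarrow> RY (ds ! i) (ds ! Suc i)"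
        using ds(1,3) unfolding cycP_def by (metis Suc_eq_plus1 Suc_lessD mod_less)
      show False
      proof (cases "?n = 3")
        case True
        have "RY (ds ! 0) (ds ! 1)" using cons[of 0] True by simp
        moreover have "ds ! 1 = a" unfolding a_def using True by simp
        moreover have "a \<in> V G" "b \<in> V G" using ab vV cV by auto
        ultimately show False using ab RY_old unfolding b_def by auto
      next
        case False
        then have l4: "3 \<le> length bs" using lbs len by simp
        have "successively (R G) bs"
        proof (rule successively_from_nth)
          fix i assume i: "Suc i < length bs"
          have "RY (bs ! i) (bs ! Suc i)" using cons[of i] bsn[of i] bsn[of "Suc i"] i lbs by simp
          moreover have "bs ! i \<in> V G" "bs ! Suc i \<in> V G" using bsV i by auto
          ultimately show "R G (bs ! i) (bs ! Suc i)" using RY_old by auto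
        qed
        moreover have "last bs = a" "hd bs = b"
        proof -
          have ne: "bs \<noteq> []" using l4 by auto
          have e1: "length bs - 1 = ?n - 2" using lbs by simp
          have "?n - 2 < ?n - 1" using len by simp
          then show "last bs = a" using ne bsn[of "?n - 2"] e1 unfolding a_def by (simp add: last_conv_nth)
          have "0 < ?n - 1" using len by simp
          then show "hd bs = b" using ne bsn[of 0] unfolding b_def by (simp add: hd_conv_nth)
        qed
        moreover have "R G a b" using ab cv Rsym by auto
        ultimately show False using tree_no_cycle[OF T bsV dbs l4] by simp
      qed
    next
      case now: False
      have sG: "set cs \<subseteq> V G" using sub noe now unfolding VY by auto
      have "cycP (R G) cs"
        using cyc sG len unfolding cycP_def
        by (metis RY_old mod_less_divisor nth_mem order_less_le_trans subset_iff zero_less_numeral)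
      then show False using tree_no_cycP[OF T sG dist len] by simp
    qed
  qed
qed

lemma tree_Y: "is_tree Y"
  unfolding is_tree_def
proof (intro conjI allI impI ballI)
  show "finite (V Y)" by (rule finY)
  show "V Y \<noteq> {}" unfolding VY by simp
  fix x y
  show "R Y x y \<Longrightarrow> x \<in> V Y" "R Y x y \<Longrightarrow> y \<in> V Y" using RY_V RY_eq by auto
  show "R Y x y \<Longrightarrow> R Y y x" using RY_sym RY_eq by auto
next
  fix x assume "x \<in> V Y"
  then show "R Y x x" unfolding VY RY_eq using RY_old Rrefl cnv by (auto simp: RY_def)
next
  show "conn_set Y (V Y)" using mono_Y[OF connG] preim_all by simp
next
  show "\<not> (\<exists>cs. 3 \<le> length cs \<and> distinct cs \<and> set cs \<subseteq> V Y \<and>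
      (\<forall>i<length cs. R Y (cs ! i) (cs ! ((i + 1) mod length cs))))"
    using acyclic_Y unfolding cycP_def RY_eq by blast
qed


lemma labY: "lab Y a = (if a = wN then Some p0 else if a = eN then None else lab G a)"
  unfolding Y_def using wN_eN by auto

lemma obj_Y: "is_obj P Y"
  unfolding is_obj_def
proof (intro conjI ballI impI)
  show "is_tree Y" by (rule tree_Y)
  show "\<exists>a\<in>V Y. 3 \<le> ord Y a" using vV v3 ord_Y_old unfolding VY by auto
  have oG: "\<And>a. a \<in> V G \<Longrightarrow> ord G a = 1 \<or> 3 \<le> ord G a" using obj unfolding is_obj_def by blast
  have lG: "\<And>a. a \<in> V G \<Longrightarrow> 3 \<le> ord G a \<Longrightarrow> (\<exists>p\<in>P. lab G a = Some p \<and> enat (ord G a) \<le> p)"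
    using obj unfolding is_obj_def by blast
  have eG: "\<And>a. a \<in> V G \<Longrightarrow> ord G a = 1 \<Longrightarrow> lab G a = None"
    using obj unfolding is_obj_def by blast
  fix a assume a: "a \<in> V Y"
  then consider "a \<in> V G" | "a = wN" | "a = eN" unfolding VY by auto
  then show "ord Y a = 1 \<or> 3 \<le> ord Y a"
    by cases (use oG ord_Y_old ord_Y_w ord_Y_e in auto)
  show "3 \<le> ord Y a \<Longrightarrow> \<exists>p\<in>P. lab Y a = Some p \<and> enat (ord Y a) \<le> p"
  proof -
    assume o3: "3 \<le> ord Y a"
    consider "a \<in> V G" | "a = wN" | "a = eN" using a unfolding VY by auto
    then show ?thesis
    proof cases
      case 1
      then have "a \<noteq> wN" "a \<noteq> eN" using wN_notin eN_notin by auto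
      then show ?thesis using lG[OF 1] o3 ord_Y_old[OF 1] labY[of a] by simp
    next
      case 2
      have "3 \<le> p0" using P3 p0 by blast
      then show ?thesis using 2 p0 ord_Y_w labY[of wN] by (auto simp: numeral_eq_enat)
    next
      case 3 then show ?thesis using o3 ord_Y_e by simp
    qed
  qed
  show "ord Y a = 1 \<Longrightarrow> lab Y a = None"
  proof -
    assume o1: "ord Y a = 1"
    consider "a \<in> V G" | "a = wN" | "a = eN" using a unfolding VY by auto
    then show ?thesis
    proof cases
      case 1
      then have "a \<noteq> wN" "a \<noteq> eN" using wN_notin eN_notin by auto
      then show ?thesis using eG[OF 1] o1 ord_Y_old[OF 1] labY[of a] by simp
    next
      case 2 then show ?thesis using o1 ord_Y_w by simp
    next
      case 3 then show ?thesis using labY[of eN] wN_eN by simp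
    qed
  qed
qed

lemma RY_g: "RY x y \<Longrightarrow> R G (g x) (g y)"
  unfolding RY_def g_def using RV Rrefl[OF vV] cv Rsym[OF cv] wN_notin eN_notin vV cV wN_eN
  by (elim disjE) auto

lemma RY_rho: "RY x y \<Longrightarrow> R G (rho x) (rho y)"
  unfolding RY_def rho_def using RV Rrefl[OF cV] cv Rsym[OF cv] wN_notin eN_notin vV cV wN_eN
  by (elim disjE) auto

lemma epi_Y: "epi Y G g"
  unfolding epi_def
proof (intro conjI allI impI ballI)
  show "\<And>x. x \<in> V Y \<Longrightarrow> g x \<in> V G" by (rule g_V)
  show "\<And>x y. R Y x y \<Longrightarrow> R G (g x) (g y)" using RY_g RY_eq by simp
  fix a a' assume r: "R G a a'"
  have aa: "a \<in> V G" "a' \<in> V G" using RV[OF r] by auto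
  show "\<exists>b b'. R Y b b' \<and> g b = a \<and> g b' = a'"
  proof (cases "a = v \<and> a' = c")
    case True
    then show ?thesis using g_old cV by (intro exI[of _ wN] exI[of _ c]) (auto simp: RY_eq RY_def g_def)
  next
    case F1: False
    show ?thesis
    proof (cases "a = c \<and> a' = v")
      case True
      then show ?thesis using g_old cV by (intro exI[of _ c] exI[of _ wN]) (auto simp: RY_eq RY_def g_def)
    next
      case False
      then show ?thesis using F1 r aa g_old RY_old by (intro exI[of _ a] exI[of _ a']) (auto simp: RY_eq)
    qed
  qed
qed

definition rr :: "nat \<Rightarrow> nat \<Rightarrow> nat" where "rr a = (if a = c then g else rho)"

lemma rr_hom: "RY x y \<Longrightarrow> R G (rr a x) (rr a y)"
  unfolding rr_def using RY_g RY_rho by auto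

lemma rr_V: "a \<in> V G \<Longrightarrow> x \<in> V Y - {a} \<Longrightarrow> rr a x \<in> V G - {a}"
  unfolding rr_def g_def rho_def VY using vV cV cnv by auto

lemma rr_old: "x \<in> V G \<Longrightarrow> rr a x = x"
  unfolding rr_def g_def rho_def using wN_notin eN_notin by auto

lemma push:
  assumes a: "a \<in> V G" and p: "(restr Y (V Y - {a}))\<^sup>*\<^sup>* x y" and x: "x \<in> V Y - {a}"
  shows "(restr G (V G - {a}))\<^sup>*\<^sup>* (rr a x) (rr a y)"
  using p
proof (induction rule: rtranclp_induct)
  case base then show ?case by simp
next
  case (step y z)
  have "restr G (V G - {a}) (rr a y) (rr a z)"
    using step(2) rr_V[OF a] rr_hom unfolding restr_def RY_eq by auto
  then show ?case using step(3) by (meson rtranclp.rtrancl_into_rtrancl)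
qed

lemma witness:
  assumes a: "a \<in> V G"
  shows "wc_witness Y G g a a"
  unfolding wc_witness_def
proof (intro conjI)
  show "a \<in> V Y" using a unfolding VY by simp
  show "g a = a" using g_old[OF a] .
  show "ord G a \<le> ord Y a" using ord_Y_old[OF a] by simp
  define sel where "sel C = (SOME x. x \<in> C)" for C :: "nat set"
  have selC: "\<And>C. C \<in> comps G a \<Longrightarrow> sel C \<in> C \<and> sel C \<in> V G - {a} \<and> C = cls G a (sel C)"
  proof -
    fix C assume "C \<in> comps G a"
    then obtain x0 where x0: "x0 \<in> V G - {a}" "C = cls G a x0" unfolding comps_cls by blast
    have "x0 \<in> C" using cls_self[OF x0(1)] x0(2) by simp
    then have s: "sel C \<in> C" unfolding sel_def by (rule someI)
    then have "sel C \<in> V G - {a}" using x0(2) unfolding cls_def by auto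
    moreover have "C = cls G a (sel C)" using cls_eq[of G "sel C" a x0] Rsym s x0(2) by auto
    ultimately show "sel C \<in> C \<and> sel C \<in> V G - {a} \<and> C = cls G a (sel C)" using s by blast
  qed
  have Ysym: "\<And>p q. R Y p q \<Longrightarrow> R Y q p" using RY_sym RY_eq by simp
  have pre_sub: "preim Y g (V G - {a}) \<subseteq> V Y - {a}" unfolding preim_def using g_old[OF a] by auto
  show "\<exists>\<phi>. inj_on \<phi> (comps G a) \<and> (\<forall>C\<in>comps G a. \<phi> C \<in> comps Y a \<and> preim Y g C \<subseteq> \<phi> C)"
  proof (intro exI[of _ "\<lambda>C. cls Y a (sel C)"] conjI ballI)
    fix C assume C: "C \<in> comps G a"
    note sC = selC[OF C]
    show "cls Y a (sel C) \<in> comps Y a" unfolding comps_cls using sC unfolding VY by auto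
    show "preim Y g C \<subseteq> cls Y a (sel C)"
    proof
      fix y assume y: "y \<in> preim Y g C"
      have yV: "y \<in> V Y" "g y \<in> C" using y unfolding preim_def by auto
      have CS: "C \<subseteq> V G - {a}" using sC unfolding cls_def by auto
      have gyc: "g y \<in> cls G a (sel C)" using sC yV by auto
      then have "(restr G (V G - {a}))\<^sup>*\<^sup>* (sel C) (g y)" unfolding cls_def by auto
      then have "(restr Y (preim Y g (V G - {a})))\<^sup>*\<^sup>* (sel C) (g y)" using lift[of "V G - {a}"] by blast
      then have p1: "(restr Y (V Y - {a}))\<^sup>*\<^sup>* (sel C) (g y)" using restr_mono_rt[OF pre_sub] by blast
      have yP: "y \<in> preim Y g (V G - {a})" using yV CS unfolding preim_def by auto
      have "(restr Y (preim Y g (V G - {a})))\<^sup>*\<^sup>* (g y) y"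
        using rtranclp_sym_lemma[OF restrY_sym to_g[OF yP]] .
      then have p2: "(restr Y (V Y - {a}))\<^sup>*\<^sup>* (g y) y" using restr_mono_rt[OF pre_sub] by blast
      have "y \<in> V Y - {a}" using yP pre_sub by auto
      then show "y \<in> cls Y a (sel C)" using p1 p2 unfolding cls_def by (auto intro: rtranclp_trans)
    qed
  next
    show "inj_on (\<lambda>C. cls Y a (sel C)) (comps G a)"
    proof (rule inj_onI)
      fix C1 C2 assume C1: "C1 \<in> comps G a" and C2: "C2 \<in> comps G a"
        and eq: "cls Y a (sel C1) = cls Y a (sel C2)"
      note s1 = selC[OF C1] and s2 = selC[OF C2]
      have "sel C2 \<in> cls Y a (sel C2)" using s2 cls_self[of "sel C2" Y a] unfolding VY by auto
      then have "(restr Y (V Y - {a}))\<^sup>*\<^sup>* (sel C1) (sel C2)" using eq unfolding cls_def by auto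
      then have "(restr G (V G - {a}))\<^sup>*\<^sup>* (rr a (sel C1)) (rr a (sel C2))"
        using push[OF a] s1 unfolding VY by auto
      then have "(restr G (V G - {a}))\<^sup>*\<^sup>* (sel C1) (sel C2)" using rr_old s1 s2 by auto
      then have "sel C2 \<in> cls G a (sel C1)" using s2 unfolding cls_def by auto
      then have "cls G a (sel C2) = cls G a (sel C1)" using cls_eq Rsym by metis
      then show "C1 = C2" using s1 s2 by auto
    qed
  qed
qed

lemma no_w_witness: "\<not> wc_witness Y G g v wN"
proof
  assume "wc_witness Y G g v wN"
  then obtain \<phi> where inj: "inj_on \<phi> (comps G v)"
    and ph: "\<And>C. C \<in> comps G v \<Longrightarrow> \<phi> C \<in> comps Y wN \<and> preim Y g C \<subseteq> \<phi> C"
    unfolding wc_witness_def by blast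
  have cN: "c \<in> NB G v" unfolding NB_def using cv cV cnv by auto
  have "card (NB G v - {c}) = card (NB G v) - 1" using cN finNB by (simp add: card_Diff_singleton)
  then have "2 \<le> card (NB G v - {c})" using v3 ord_NB by simp
  then obtain n1 n2 where n: "n1 \<in> NB G v - {c}" "n2 \<in> NB G v - {c}" "n1 \<noteq> n2"
    using two_elems[of "NB G v - {c}"] finNB by blast
  have nV: "n1 \<in> V G - {v}" "n2 \<in> V G - {v}" "R G v n1" "R G v n2" "n1 \<noteq> c" "n2 \<noteq> c"
    using n unfolding NB_def by auto
  define C1 where "C1 = cls G v n1"
  define C2 where "C2 = cls G v n2"
  have Cc: "C1 \<in> comps G v" "C2 \<in> comps G v" unfolding comps_cls C1_def C2_def using nV by auto
  have Ysym: "\<And>p q. R Y p q \<Longrightarrow> R Y q p" using RY_sym RY_eq by simp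
  have inph: "n1 \<in> \<phi> C1" "n2 \<in> \<phi> C2"
  proof -
    have "n1 \<in> preim Y g C1" using cls_self[OF nV(1)] nV g_old unfolding C1_def preim_def VY by auto
    then show "n1 \<in> \<phi> C1" using ph[OF Cc(1)] by blast
    have "n2 \<in> preim Y g C2" using cls_self[OF nV(2)] nV g_old unfolding C2_def preim_def VY by auto
    then show "n2 \<in> \<phi> C2" using ph[OF Cc(2)] by blast
  qed
  have phcls: "\<phi> C1 = cls Y wN n1" "\<phi> C2 = cls Y wN n2"
  proof -
    obtain t1 where "t1 \<in> V Y - {wN}" "\<phi> C1 = cls Y wN t1" using ph[OF Cc(1)] unfolding comps_cls by blast
    then show "\<phi> C1 = cls Y wN n1" using cls_eq[OF Ysym, of n1 wN t1] inph by simp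
    obtain t2 where "t2 \<in> V Y - {wN}" "\<phi> C2 = cls Y wN t2" using ph[OF Cc(2)] unfolding comps_cls by blast
    then show "\<phi> C2 = cls Y wN n2" using cls_eq[OF Ysym, of n2 wN t2] inph by simp
  qed
  have wv: "wN \<noteq> v" "wN \<noteq> n1" "wN \<noteq> n2" using wN_notin vV nV by auto
  have "RY n1 v" "RY v n2" using RY_old nV vV Rsym by auto
  then have "restr Y (V Y - {wN}) n1 v" "restr Y (V Y - {wN}) v n2"
    using wv nV vV unfolding restr_def RY_eq VY by auto
  then have "(restr Y (V Y - {wN}))\<^sup>*\<^sup>* n1 n2" by (meson rtranclp.rtrancl_into_rtrancl rtranclp.rtrancl_refl)
  then have "n2 \<in> cls Y wN n1" using nV wv unfolding cls_def VY by auto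
  then have "cls Y wN n2 = cls Y wN n1" using cls_eq[OF Ysym] by metis
  then have "C1 = C2" using inj Cc phcls unfolding inj_on_def by metis
  then have "n2 \<in> cls G v n1" using cls_self[OF nV(2)] unfolding C1_def C2_def by simp
  then have "(restr G (V G - {v}))\<^sup>*\<^sup>* n1 n2" unfolding cls_def by auto
  then obtain ps where ps: "ps \<noteq> []" "hd ps = n1" "last ps = n2" "distinct ps" "set ps \<subseteq> V G - {v}"
      "successively (R G) ps"
    using simple_path[of G "V G - {v}" n1 n2] nV by blast
  have "2 \<le> length ps"
  proof (cases ps)
    case Nil then show ?thesis using ps by simp
  next
    case (Cons y ys) then show ?thesis using ps n(3) by (cases ys) auto
  qed
  then have l: "3 \<le> length (ps @ [v])" by simp
  have "set (ps @ [v]) \<subseteq> V G" using ps vV by auto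
  moreover have "distinct (ps @ [v])" using ps by auto
  moreover have "successively (R G) (ps @ [v])" using ps nV Rsym by (simp add: successively_append_iff)
  moreover have "R G (last (ps @ [v])) (hd (ps @ [v]))" using ps nV by simp
  ultimately show False using tree_no_cycle[OF T] l by blast
qed

definition garr :: arrow where "garr = \<lparr>pm = g, em = id\<rparr>"

lemma arrow_Y: "is_arrow P Y G garr"
  unfolding is_arrow_def garr_def
proof (simp, intro conjI ballI allI impI)
  show "weakly_coherent Y G g"
    unfolding weakly_coherent_def mono_epi_def using epi_Y mono_Y witness by blast
next
  fix a b p assume a: "a \<in> V G" and H: "lab G a = Some p \<and> wc_witness Y G g a b"
  have b: "b \<in> V Y" "g b = a" "ord G a \<le> ord Y b" using H unfolding wc_witness_def by auto
  consider "b \<in> V G" | "b = wN" | "b = eN" using b unfolding VY by auto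
  then show "lab Y b = Some p"
  proof cases
    case 1
    then have "b \<noteq> wN" "b \<noteq> eN" using wN_notin eN_notin by auto
    then show ?thesis using 1 b g_old labY[of b] H by simp
  next
    case 2 then show ?thesis using no_w_witness H b unfolding g_def by auto
  next
    case 3 then show ?thesis using b ord_Y_e v3 unfolding g_def by auto
  qed
next
  fix y assume y: "y \<in> Ends G"
  then have yV: "y \<in> V G" using Ends_V by blast
  show "y \<in> Ends Y" using y ord_Y_old[OF yV] unfolding Ends_def VY by auto
  show "g y = y" using g_old[OF yV] .
qed

lemma eN_end: "eN \<in> Ends Y \<and> g eN = v"
  using ord_Y_e unfolding Ends_def VY g_def by auto

end


lemma ext_exists:
  assumes P3: "\<forall>p\<in>P. 3 \<le> p" and obj: "is_obj P G" and vV: "v \<in> V G" and v3: "3 \<le> ord G v"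
  shows "\<exists>Y h. is_obj P Y \<and> is_arrow P Y G h \<and> (\<exists>e\<in>Ends Y. pm h e = v)"
proof -
  have "card {y \<in> V G. y \<noteq> v \<and> R G v y} \<noteq> 0" using v3 unfolding ord_def by simp
  then obtain c where c: "c \<in> V G" "c \<noteq> v" "R G v c"
    by (metis (mono_tags, lifting) card.empty empty_Collect_eq)
  obtain p0 where p0: "lab G v = Some p0" "p0 \<in> P" using obj vV v3 unfolding is_obj_def by blast
  interpret E: extc P G v c p0
    using P3 obj vV v3 c p0 by unfold_locales auto
  show ?thesis using E.obj_Y E.arrow_Y E.eN_end unfolding E.garr_def
    by (intro exI[of _ E.Y] exI[of _ E.garr]) (auto simp: E.garr_def)
qed

lemma dense_pt:
  assumes fs: "fraisse_seq P F f" and P3: "\<forall>p\<in>P. 3 \<le> p" and v: "v \<in> V (F k)"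
  shows "\<exists>m\<ge>k. \<exists>e\<in>Ends (F m). pm (f m k) e = v"
proof (cases "ord (F k) v = 1")
  case True
  then have "v \<in> Ends (F k)" using v unfolding Ends_def by simp
  then show ?thesis using fs_id[OF fs v] by (intro exI[of _ k]) auto
next
  case False
  then have v3: "3 \<le> ord (F k) v" using fs_obj[OF fs, of k] v unfolding is_obj_def by blast
  obtain Y h e where Yh: "is_obj P Y" "is_arrow P Y (F k) h" "e \<in> Ends Y" "pm h e = v"
    using ext_exists[OF P3 fs_obj[OF fs] v v3] by blast
  have "\<forall>n Y g. is_obj P Y \<and> is_arrow P Y (F n) g \<longrightarrow>
        (\<exists>m\<ge>n. \<exists>h. is_arrow P (F m) Y h \<and> arr_eq (F m) (F n) (comp g h) (f m n))"
    using fs unfolding fraisse_seq_def by blast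
  then obtain m h' where m: "m \<ge> k" "is_arrow P (F m) Y h'" "arr_eq (F m) (F k) (comp h h') (f m k)"
    using Yh by blast
  have e': "em h' e \<in> Ends (F m)" "pm h' (em h' e) = e" using arrow_em[OF m(2) Yh(3)] by auto
  have eV: "em h' e \<in> V (F m)" using e'(1) Ends_V by blast
  have "pm (f m k) (em h' e) = pm h (pm h' (em h' e))"
    using m(3) eV unfolding arr_eq_def comp_def by simp
  then show ?thesis using e' Yh(4) m(1) by auto
qed

lemma elim_hits:
  assumes fs: "fraisse_seq P F f" and P3: "\<forall>p\<in>P. 3 \<le> p" and v: "v \<in> V (F k)"
  shows "\<exists>y\<in>Elim F f. y k = v"
proof -
  obtain m e where me: "m \<ge> k" "e \<in> Ends (F m)" "pm (f m k) e = v" using dense_pt[OF fs P3 v] by blast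
  have "eseq f m e k = v"
  proof (cases "k = m")
    case True
    have "e \<in> V (F m)" using me(2) Ends_V by blast
    then have "pm (f m m) e = e" using fs_id[OF fs] by blast
    then show ?thesis using True me by (simp add: eseq_def)
  next
    case False then show ?thesis using me by (simp add: eseq_def)
  qed
  then show ?thesis using me(2) unfolding Elim_eq by blast
qed

lemma density:
  assumes fs: "fraisse_seq P F f" and P3: "\<forall>p\<in>P. 3 \<le> p"
  shows "(Ftop F f) closure_of (Elim F f) = topspace (Ftop F f)"
proof (rule antisym)
  show "Ftop F f closure_of Elim F f \<subseteq> topspace (Ftop F f)" by (rule closure_of_subset_topspace)
  show "topspace (Ftop F f) \<subseteq> Ftop F f closure_of Elim F f"
  proof
    fix z assume zt: "z \<in> topspace (Ftop F f)"
    then have zF: "z \<in> Flim F f" using topspace_Ftop by simp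
    show "z \<in> Ftop F f closure_of Elim F f"
      unfolding in_closure_of
    proof (intro conjI allI impI)
      show "z \<in> topspace (Ftop F f)" by fact
      fix T assume T: "z \<in> T \<and> openin (Ftop F f) T"
      then obtain T' where T': "openin (product_topology (\<lambda>i. discrete_topology (V (F i))) UNIV) T'"
        "T = T' \<inter> Flim F f"
        unfolding Ftop_def openin_subtopology by blast
      have "z \<in> T'" using T T' by auto
      then obtain U where U: "finite {i \<in> UNIV. U i \<noteq> V (F i)}" "\<forall>i. U i \<subseteq> V (F i)"
        "z \<in> Pi\<^sub>E UNIV U" "Pi\<^sub>E UNIV U \<subseteq> T'"
        using T'(1) unfolding openin_product_topology_alt by auto
      obtain k where k: "\<forall>i \<in> {i \<in> UNIV. U i \<noteq> V (F i)}. i \<le> k"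
        using U(1) finite_nat_set_iff_bounded_le by blast
      have zk: "z k \<in> V (F k)" using zF unfolding Flim_def by auto
      obtain y where y: "y \<in> Elim F f" "y k = z k" using elim_hits[OF fs P3 zk] by blast
      have yF: "y \<in> Flim F f" using y Elim_sub[OF fs] by blast
      have "y \<in> Pi\<^sub>E UNIV U"
      proof (simp add: PiE_iff, intro allI)
        fix i
        show "y i \<in> U i"
        proof (cases "U i = V (F i)")
          case True then show ?thesis using yF unfolding Flim_def by auto
        next
          case False
          then have ik: "i \<le> k" using k by auto
          have "y i = z i" using flim_proj[OF fs yF ik] flim_proj[OF fs zF ik] y(2) by metis
          then show ?thesis using U(3) by (auto simp: PiE_iff)
        qed
      qed
      then have "y \<in> T" using U(4) T'(2) yF by auto
      then show "\<exists>y. y \<in> Elim F f \<and> y \<in> T" using y by blast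
    qed
  qed
qed

theorem mainTheorem5:
  fixes P :: "enat set" and F :: "nat \<Rightarrow> ltree" and f :: "nat \<Rightarrow> nat \<Rightarrow> arrow"
  assumes "\<forall>p\<in>P. 3 \<le> p"
    and "fraisse_seq P F f"
  shows "Elim F f \<subseteq> {x. tg_endpoint (Ftop F f) (Rlim F) x}
    \<and> (Ftop F f) closure_of (Elim F f) = topspace (Ftop F f)"
  using elim_endpoint[OF assms(2)] density[OF assms(2,1)] by blast

end
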